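(* Let $n\ge2$, $A_0,\dots,A_{n-1}\in\mathbb{R}$, $A_n=1$, $F(a)=\sum_{k=0}^nA_ka^k$, and define $\sigma_k$ by $(-1)^k\sigma_k=A_{n-k}$, $0\le k\le n$. Let $x(a)$ be smooth with $\dot x\neq0$ on an open interval $I\subset(0,\infty)$, $H=\Pi^2+aP_y^2$, $\Pi=\frac a{\dot x}P_a$, $G=\sum_{k=0}^nA_kH^kP_y^{2(n-k)}$, and $$Q_1=\sum_{k=1}^n(-1)^k\beta_k(a)\,H^{n-k}\,\Pi\,P_y^{2k-1},\qquad S_1=Q_1+yG .$$ If the functions $\beta_k$ satisfy $$\dot\beta_1=\dot x,\qquad \dot\beta_{k+1}=-a\dot\beta_k-\tfrac12\beta_k+\sigma_k\dot x\ \ (1\le k\le n-1),\qquad 0=-a\dot\beta_n-\tfrac12\beta_n+\sigma_n\dot x,$$ then $\{H,S_1\}=0$. Moreover, if $F=\prod_{i=1}^n(a-a_i)$ with distinct real $a_i$ and $x=\sum_{i=1}^n\xi_i\Delta_i^{-1/2}$ with $\Delta_i=\epsilon_i(a-a_i)>0$, $\epsilon_i\in\{\pm1\}$, $\xi_i\in\mathbb{R}$, then $\beta_k=\sum_{i=1}^n\frac{\xi_i}{\sqrt{\Delta_i}}\sigma^i_{k-1}$ ($1\le k\le n$) solves this system.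
   Context: A dot denotes $d/da$; $\{\cdot,\cdot\}$ is the canonical Poisson bracket with $(P_a,P_y)$ conjugate to $(a,y)$. For each $i$, $\sigma^i_m$ ($-1\le m\le n$) are defined by $\prod_{l\neq i}(a-a_l)=\sum_{m=0}^{n-1}(-1)^m\sigma^i_ma^{n-1-m}$ with $\sigma^i_{-1}=\sigma^i_n=0$. *)

theory Defs
  imports "HOL-Analysis.Analysis" "HOL-Computational_Algebra.Polynomial"
begin

definition smooth_real_on :: "real set \<Rightarrow> (real \<Rightarrow> real) \<Rightarrow> bool" where
  "smooth_real_on I f \<longleftrightarrow> (\<forall>k. \<forall>a\<in>I. ((deriv ^^ k) f) differentiable (at a))"

text \<open>Canonical Poisson bracket on phase space with coordinates (a, y, P_a, P_y);
  a function on phase space is written f a y Pa Py.\<close>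
definition poisson ::
  "(real \<Rightarrow> real \<Rightarrow> real \<Rightarrow> real \<Rightarrow> real) \<Rightarrow> (real \<Rightarrow> real \<Rightarrow> real \<Rightarrow> real \<Rightarrow> real)
   \<Rightarrow> real \<Rightarrow> real \<Rightarrow> real \<Rightarrow> real \<Rightarrow> real" where
  "poisson f g a y p q =
     deriv (\<lambda>t. f t y p q) a * deriv (\<lambda>t. g a y t q) p
   - deriv (\<lambda>t. f a y t q) p * deriv (\<lambda>t. g t y p q) a
   + deriv (\<lambda>t. f a t p q) y * deriv (\<lambda>t. g a y p t) q
   - deriv (\<lambda>t. f a y p t) q * deriv (\<lambda>t. g a t p q) y"

definition sigmaA :: "nat \<Rightarrow> (nat \<Rightarrow> real) \<Rightarrow> nat \<Rightarrow> real" where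
  "sigmaA n A k = (-1) ^ k * A (n - k)"

definition PiF :: "(real \<Rightarrow> real) \<Rightarrow> real \<Rightarrow> real \<Rightarrow> real" where
  "PiF x a p = a / deriv x a * p"

definition HF :: "(real \<Rightarrow> real) \<Rightarrow> real \<Rightarrow> real \<Rightarrow> real \<Rightarrow> real \<Rightarrow> real" where
  "HF x a y p q = (PiF x a p)^2 + a * q^2"

definition GF :: "nat \<Rightarrow> (nat \<Rightarrow> real) \<Rightarrow> (real \<Rightarrow> real) \<Rightarrow> real \<Rightarrow> real \<Rightarrow> real \<Rightarrow> real \<Rightarrow> real" where
  "GF n A x a y p q = (\<Sum>k=0..n. A k * (HF x a y p q)^k * q^(2*(n-k)))"

definition Q1F :: "nat \<Rightarrow> (nat \<Rightarrow> real \<Rightarrow> real) \<Rightarrow> (real \<Rightarrow> real) \<Rightarrow> real \<Rightarrow> real \<Rightarrow> real \<Rightarrow> real \<Rightarrow> real" where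
  "Q1F n \<beta> x a y p q =
     (\<Sum>k=1..n. (-1)^k * \<beta> k a * (HF x a y p q)^(n-k) * PiF x a p * q^(2*k-1))"

definition S1F :: "nat \<Rightarrow> (nat \<Rightarrow> real) \<Rightarrow> (nat \<Rightarrow> real \<Rightarrow> real) \<Rightarrow> (real \<Rightarrow> real)
   \<Rightarrow> real \<Rightarrow> real \<Rightarrow> real \<Rightarrow> real \<Rightarrow> real" where
  "S1F n A \<beta> x a y p q = Q1F n \<beta> x a y p q + y * GF n A x a y p q"

text \<open>sigma^i_m for the roots r_1..r_n: prod_{l /= i}(a - r_l) = sum_{m=0}^{n-1} (-1)^m sigma^i_m a^{n-1-m},
  and sigma^i_m = 0 for m >= n (the case m = -1 is never needed).\<close>
definition sigmaI :: "nat \<Rightarrow> (nat \<Rightarrow> real) \<Rightarrow> nat \<Rightarrow> nat \<Rightarrow> real" where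
  "sigmaI n r i m = (if m < n then (-1)^m *
      coeff (\<Prod>l\<in>{1..n}-{i}. [:- r l, 1:]) (n - 1 - m) else 0)"

definition beta_system :: "nat \<Rightarrow> (nat \<Rightarrow> real) \<Rightarrow> (real \<Rightarrow> real) \<Rightarrow> (nat \<Rightarrow> real \<Rightarrow> real) \<Rightarrow> real set \<Rightarrow> bool" where
  "beta_system n A x \<beta> I \<longleftrightarrow> (\<forall>a\<in>I.
      deriv (\<beta> 1) a = deriv x a \<and>
      (\<forall>k. 1 \<le> k \<and> k \<le> n - 1 \<longrightarrow>
         deriv (\<beta> (k+1)) a = - a * deriv (\<beta> k) a - \<beta> k a / 2 + sigmaA n A k * deriv x a) \<and>
      0 = - a * deriv (\<beta> n) a - \<beta> n a / 2 + sigmaA n A n * deriv x a)"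

end

theory Submission
  imports Defs
begin


lemma core_sum:
  fixes \<beta> b \<sigma> :: "nat \<Rightarrow> real" and a d q H :: real
  assumes b1: "b 1 = d"
    and rec: "\<forall>k. 1 \<le> k \<and> k \<le> n-1 \<longrightarrow> b(k+1) = -a*b k - \<beta> k/2 + \<sigma> k * d"
    and last: "0 = -a*b n - \<beta> n/2 + \<sigma> n * d"
    and n1: "n \<ge> 1" and s0: "\<sigma> 0 = 1"
  shows "(\<Sum>k=1..n. (-1)^k * q^(2*k-1) * H^(n-k) * ((\<beta> k + 2*a*b k)*q^2 - 2*H*b k))
     = 2*d*(\<Sum>k=0..n. \<sigma> k * ((-1)^k * q^(2*k+1) * H^(n-k)))"
proof -
  define B where "B k = (if k \<le> n then b k else 0)" for k
  define u where "u k = (-1::real)^k * q^(2*k+1) * H^(n-k)" for k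
  define f where "f k = u (k-1) * B k" for k
  have e: "\<beta> k + 2*a*b k = 2*\<sigma> k*d - 2*B(k+1)" if "k \<in> {1..n}" for k
  proof (cases "k < n")
    case True
    then show ?thesis using rec[rule_format, of k] that by (auto simp: B_def)
  next
    case False
    then have "k = n" using that by auto
    then show ?thesis using last by (auto simp: B_def)
  qed
  have t: "(-1)^k * q^(2*k-1) * H^(n-k) * ((\<beta> k + 2*a*b k)*q^2 - 2*H*b k)
      = 2*d*(\<sigma> k * u k) + 2*(f k - f (Suc k))" if k: "k \<in> {1..n}" for k
  proof -
    obtain j where j: "k = Suc j" using k by (cases k) auto
    have nk: "n - j = Suc (n - k)" using k j by auto
    have bk: "b k = B k" using k by (simp add: B_def)
    have "(-1)^k * q^(2*k-1) * H^(n-k) * ((\<beta> k + 2*a*b k)*q^2 - 2*H*b k)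
        = u k * (\<beta> k + 2*a*b k) + 2 * u j * b k"
      unfolding u_def j nk by (simp add: algebra_simps power2_eq_square)
    also have "\<dots> = 2*d*(\<sigma> k * u k) + 2*(f k - f (Suc k))"
    proof -
      have "u k * (\<beta> k + 2*a*b k) = u k * (2*\<sigma> k*d - 2*B(k+1))" using e[OF k] by simp
      then show ?thesis using bk unfolding f_def j by (simp add: algebra_simps)
    qed
    finally show ?thesis .
  qed
  have "(\<Sum>k=1..n. (-1)^k * q^(2*k-1) * H^(n-k) * ((\<beta> k + 2*a*b k)*q^2 - 2*H*b k))
      = (\<Sum>k=1..n. 2*d*(\<sigma> k * u k) + 2*(f k - f (Suc k)))"
    using t by (rule sum.cong[OF refl])
  also have "\<dots> = 2*d*(\<Sum>k=1..n. \<sigma> k * u k) + 2*(\<Sum>k=1..n. f k - f (Suc k))"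
    by (simp add: sum.distrib sum_distrib_left)
  also have "(\<Sum>k=1..n. f k - f (Suc k)) = f 1 - f (Suc n)"
  proof -
    have "(\<Sum>k=1..n. f k - f (Suc k)) = - (\<Sum>k=1..n. f (Suc k) - f k)"
      by (simp add: sum_negf[symmetric])
    then show ?thesis using sum_Suc_diff[of 1 n f] n1 by simp
  qed
  also have "f 1 - f (Suc n) = d * u 0" using n1 b1 by (simp add: f_def B_def)
  finally have "(\<Sum>k=1..n. (-1)^k * q^(2*k-1) * H^(n-k) * ((\<beta> k + 2*a*b k)*q^2 - 2*H*b k))
      = 2*d*(\<sigma> 0 * u 0 + (\<Sum>k=1..n. \<sigma> k * u k))" using s0 by (simp add: algebra_simps)
  also have "\<sigma> 0 * u 0 + (\<Sum>k=1..n. \<sigma> k * u k) = (\<Sum>k=0..n. \<sigma> k * u k)"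
    by (simp add: sum.atLeast_Suc_atMost)
  finally show ?thesis unfolding u_def .
qed



lemma S_deriv:
  fixes Hf Pf :: "real \<Rightarrow> real" and \<beta> :: "nat \<Rightarrow> real \<Rightarrow> real"
  assumes DH: "(Hf has_real_derivative Ha) (at a)" and DP: "(Pf has_real_derivative Pa) (at a)"
    and Db: "\<And>k. k\<in>{1..n} \<Longrightarrow> (\<beta> k has_real_derivative b k) (at a)"
  shows "((\<lambda>t. (\<Sum>k=1..n. (-1)^k * \<beta> k t * Hf t^(n-k) * Pf t * c k) + y*(\<Sum>k=0..n. A k * Hf t^k * e k))
     has_real_derivative
     (\<Sum>k=1..n. (-1)^k * (b k * Hf a^(n-k)*Pf a + \<beta> k a * (real(n-k)*Hf a^(n-k-1)*Ha)*Pf a + \<beta> k a*Hf a^(n-k)*Pa) * c k)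
       + y*(\<Sum>k=0..n. A k *(real k * Hf a^(k-1)*Ha) * e k)) (at a)"
proof -
  have T: "((\<lambda>t. (-1)^k * \<beta> k t * Hf t^(n-k) * Pf t * c k) has_real_derivative
      (-1)^k * (b k * Hf a^(n-k)*Pf a + \<beta> k a * (real(n-k)*Hf a^(n-k-1)*Ha)*Pf a + \<beta> k a*Hf a^(n-k)*Pa) * c k) (at a)"
    if k: "k \<in> {1..n}" for k
    by (auto intro!: derivative_eq_intros Db[OF k] DH DP simp: algebra_simps)
  have G: "((\<lambda>t. A k * Hf t^k * e k) has_real_derivative A k *(real k * Hf a^(k-1)*Ha) * e k) (at a)" for k
    by (auto intro!: derivative_eq_intros DH simp: algebra_simps)
  show ?thesis
    by (intro DERIV_add DERIV_cmult DERIV_sum T G)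
qed

lemma lin_comb:
  fixes Ha Hp y :: real
  shows "Ha * ((\<Sum>k\<in>S. X k) + y*(\<Sum>k\<in>T. Y k)) - Hp * ((\<Sum>k\<in>S. X' k) + y*(\<Sum>k\<in>T. Y' k))
   = (\<Sum>k\<in>S. Ha * X k - Hp * X' k) + y * (\<Sum>k\<in>T. Ha * Y k - Hp * Y' k)"
  by (simp add: sum_subtractf sum_distrib_left algebra_simps)

lemma part1:
  fixes x :: "real \<Rightarrow> real" and \<beta> :: "nat \<Rightarrow> real \<Rightarrow> real"
  assumes n1: "n \<ge> 1" and An: "A n = 1" and I_pos: "I \<subseteq> {0<..}"
    and sm: "smooth_real_on I x" and dx: "\<forall>a\<in>I. deriv x a \<noteq> 0"
    and bd: "\<forall>k\<in>{1..n}. \<forall>a\<in>I. \<beta> k differentiable (at a)"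
    and bs: "beta_system n A x \<beta> I" and aI: "a \<in> I"
  shows "poisson (HF x) (S1F n A \<beta> x) a y p q = 0"
proof -
  define d where "d = deriv x a"
  define dd where "dd = deriv (deriv x) a"
  have d0: "d \<noteq> 0" using dx aI by (simp add: d_def)
  have a0: "a > 0" using I_pos aI by auto
  have "deriv x differentiable (at a)"
    using sm aI unfolding smooth_real_on_def by (metis One_nat_def funpow.simps(2) funpow_0 comp_apply)
  then have Dd: "(deriv x has_real_derivative dd) (at a)"
    unfolding dd_def by (simp add: DERIV_deriv_iff_real_differentiable)
  define W where "W t = t / deriv x t" for t
  define W' where "W' = (d - a*dd)/d^2"
  have DW: "(W has_real_derivative W') (at a)"
    unfolding W_def W'_def
    by (auto intro!: derivative_eq_intros Dd simp: d_def[symmetric] d0 power2_eq_square)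
  have HF_eq: "\<And>t y' p' q'. HF x t y' p' q' = (W t * p')^2 + t*q'^2"
    by (simp add: HF_def PiF_def W_def)
  have PiF_eq: "\<And>t p'. PiF x t p' = W t * p'" by (simp add: PiF_def W_def)
  define H where "H = HF x a y p q"
  define Pi where "Pi = W a * p"
  define Ha where "Ha = 2*(W a*p)*(W'*p) + q^2"
  define Hp where "Hp = 2*(W a*p)*W a"
  define b where "b k = deriv (\<beta> k) a" for k
  define G where "G = (\<Sum>k=0..n. A k * H^k * q^(2*(n-k)))"
  have DHa: "((\<lambda>t. HF x t y p q) has_real_derivative Ha) (at a)"
    unfolding HF_eq Ha_def by (auto intro!: derivative_eq_intros DW simp: algebra_simps power2_eq_square)
  have DHp: "((\<lambda>t. HF x a y t q) has_real_derivative Hp) (at p)"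
    unfolding HF_eq Hp_def by (auto intro!: derivative_eq_intros simp: algebra_simps power2_eq_square)
  have DHy: "deriv (\<lambda>t. HF x a t p q) y = 0" by (simp add: HF_def)
  have DHq: "deriv (\<lambda>t. HF x a y p t) q = 2*a*q"
    unfolding HF_eq
    by (rule DERIV_imp_deriv) (auto intro!: derivative_eq_intros)
  have Db: "(\<beta> k has_real_derivative b k) (at a)" if "k \<in> {1..n}" for k
    using bd that aI unfolding b_def by (simp add: DERIV_deriv_iff_real_differentiable)
  have DPa: "((\<lambda>t. PiF x t p) has_real_derivative W'*p) (at a)"
    unfolding PiF_eq by (auto intro!: derivative_eq_intros DW)
  have DPp: "((\<lambda>t. PiF x a t) has_real_derivative W a) (at p)"
    unfolding PiF_eq by (auto intro!: derivative_eq_intros)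
  have S1_eq: "\<And>t y' p' q'. S1F n A \<beta> x t y' p' q' =
     (\<Sum>k=1..n. (-1)^k * \<beta> k t * (HF x t y' p' q')^(n-k) * PiF x t p' * q'^(2*k-1))
      + y'*(\<Sum>k=0..n. A k * (HF x t y' p' q')^k * q'^(2*(n-k)))"
    by (simp add: S1F_def Q1F_def GF_def)
  define Sa where "Sa = (\<Sum>k=1..n. (-1)^k * (b k * H^(n-k)*Pi + \<beta> k a * (real(n-k)*H^(n-k-1)*Ha)*Pi + \<beta> k a*H^(n-k)*(W'*p)) * q^(2*k-1))
       + y*(\<Sum>k=0..n. A k *(real k * H^(k-1)*Ha) * q^(2*(n-k)))"
  define Sp where "Sp = (\<Sum>k=1..n. (-1)^k * (0 * H^(n-k)*Pi + \<beta> k a * (real(n-k)*H^(n-k-1)*Hp)*Pi + \<beta> k a*H^(n-k)*(W a)) * q^(2*k-1))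
       + y*(\<Sum>k=0..n. A k *(real k * H^(k-1)*Hp) * q^(2*(n-k)))"
  have DSa: "((\<lambda>t. S1F n A \<beta> x t y p q) has_real_derivative Sa) (at a)"
    unfolding S1_eq Sa_def H_def Pi_def PiF_eq[symmetric]
    by (rule S_deriv[OF DHa DPa Db])
  have DSp: "((\<lambda>t. S1F n A \<beta> x a y t q) has_real_derivative Sp) (at p)"
    unfolding S1_eq Sp_def H_def Pi_def PiF_eq[symmetric]
    by (rule S_deriv[OF DHp DPp, where \<beta>="\<lambda>k _. \<beta> k a" and b="\<lambda>_. 0"]) auto
  have DSy: "deriv (\<lambda>t. S1F n A \<beta> x a t p q) y = G"
  proof -
    have "(\<lambda>t. S1F n A \<beta> x a t p q) = (\<lambda>t. Q1F n \<beta> x a y p q + t * G)"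
      by (simp add: S1F_def Q1F_def GF_def G_def H_def HF_def)
    then show ?thesis by (auto intro!: DERIV_imp_deriv derivative_eq_intros)
  qed
  have P: "poisson (HF x) (S1F n A \<beta> x) a y p q = Ha * Sp - Hp * Sa - 2*a*q*G"
    unfolding poisson_def DHy DHq DSy DERIV_imp_deriv[OF DHa] DERIV_imp_deriv[OF DHp]
      DERIV_imp_deriv[OF DSa] DERIV_imp_deriv[OF DSp] by simp
  have s1: "Ha * Sp - Hp * Sa = (\<Sum>k=1..n. Ha * ((-1)^k * (0 * H^(n-k)*Pi + \<beta> k a * (real(n-k)*H^(n-k-1)*Hp)*Pi + \<beta> k a*H^(n-k)*(W a)) * q^(2*k-1))
      - Hp * ((-1)^k * (b k * H^(n-k)*Pi + \<beta> k a * (real(n-k)*H^(n-k-1)*Ha)*Pi + \<beta> k a*H^(n-k)*(W'*p)) * q^(2*k-1)))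
     + y * (\<Sum>k=0..n. Ha * (A k *(real k * H^(k-1)*Hp) * q^(2*(n-k))) - Hp * (A k *(real k * H^(k-1)*Ha) * q^(2*(n-k))))"
    unfolding Sa_def Sp_def by (rule lin_comb)
  have Hsq: "Pi^2 = H - a*q^2" unfolding H_def Pi_def HF_eq by simp
  have s2: "Ha * ((-1)^k * (0 * H^(n-k)*Pi + \<beta> k a * (real(n-k)*H^(n-k-1)*Hp)*Pi + \<beta> k a*H^(n-k)*(W a)) * q^(2*k-1))
      - Hp * ((-1)^k * (b k * H^(n-k)*Pi + \<beta> k a * (real(n-k)*H^(n-k-1)*Ha)*Pi + \<beta> k a*H^(n-k)*(W'*p)) * q^(2*k-1))
     = W a * ((-1)^k * q^(2*k-1) * H^(n-k) * ((\<beta> k a + 2*a*b k)*q^2 - 2*H*b k))" for k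
  proof -
    have "Ha * ((-1)^k * (0 * H^(n-k)*Pi + \<beta> k a * (real(n-k)*H^(n-k-1)*Hp)*Pi + \<beta> k a*H^(n-k)*(W a)) * q^(2*k-1))
      - Hp * ((-1)^k * (b k * H^(n-k)*Pi + \<beta> k a * (real(n-k)*H^(n-k-1)*Ha)*Pi + \<beta> k a*H^(n-k)*(W'*p)) * q^(2*k-1))
      = W a * ((-1)^k * q^(2*k-1) * H^(n-k) * (\<beta> k a*q^2 - 2*Pi^2*b k))"
      unfolding Ha_def Hp_def Pi_def by (simp add: algebra_simps power2_eq_square)
    then show ?thesis unfolding Hsq by (simp add: algebra_simps)
  qed
  have core: "(\<Sum>k=1..n. (-1)^k * q^(2*k-1) * H^(n-k) * ((\<beta> k a + 2*a*b k)*q^2 - 2*H*b k))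
     = 2*d*(\<Sum>k=0..n. sigmaA n A k * ((-1)^k * q^(2*k+1) * H^(n-k)))"
    apply (rule core_sum[where \<beta>="\<lambda>k. \<beta> k a"])
    using bs aI n1 An unfolding beta_system_def b_def d_def by (auto simp: sigmaA_def)
  have rev: "(\<Sum>k=0..n. sigmaA n A k * ((-1)^k * q^(2*k+1) * H^(n-k))) = q * G"
  proof -
    have "G = (\<Sum>k=0..n. A (n + 0 - k) * H^(n+0-k) * q^(2*(n-(n+0-k))))"
      unfolding G_def by (rule sum.atLeastAtMost_rev)
    also have "\<dots> = (\<Sum>k=0..n. A (n - k) * H^(n-k) * q^(2*k))"
      by (rule sum.cong) auto
    finally have "q * G = (\<Sum>k=0..n. A (n - k) * H^(n-k) * q^(2*k+1))"
      by (simp add: sum_distrib_left algebra_simps)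
    also have "\<dots> = (\<Sum>k=0..n. sigmaA n A k * ((-1)^k * q^(2*k+1) * H^(n-k)))"
      by (rule sum.cong) (auto simp: sigmaA_def algebra_simps power_mult_distrib[symmetric])
    finally show ?thesis by simp
  qed
  have Wa: "W a * d = a" unfolding W_def d_def using d0 d_def by simp
  have "Ha * Sp - Hp * Sa = W a * (2*d*(q*G))"
    unfolding s1 s2 sum_distrib_left[symmetric] core rev by simp
  also have "\<dots> = 2*a*q*G" using Wa by (simp add: algebra_simps)
  finally show ?thesis unfolding P by simp
qed



lemma sigmaI0:
  assumes i: "i \<in> {1..n}" and n1: "n \<ge> 1"
  shows "sigmaI n r i 0 = 1"
proof -
  define P where "P = (\<Prod>l\<in>{1..n}-{i}. [:- r l, 1::real:])"
  have "degree P = (\<Sum>l\<in>{1..n}-{i}. degree [:- r l, 1::real:])"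
    unfolding P_def by (rule degree_prod_sum_eq) auto
  also have "\<dots> = n - 1" using i by simp
  finally have dP: "degree P = n - 1" .
  have "lead_coeff P = 1" unfolding P_def lead_coeff_prod by simp
  then show ?thesis using n1 dP unfolding sigmaI_def P_def[symmetric] by simp
qed

lemma sigma_rec:
  fixes A r :: "nat \<Rightarrow> real"
  assumes poly: "\<forall>t. (\<Sum>k=0..n. A k * t^k) = (\<Prod>i=1..n. t - r i)"
    and i: "i \<in> {1..n}" and k: "1 \<le> k" "k \<le> n"
  shows "sigmaA n A k = sigmaI n r i k + r i * sigmaI n r i (k-1)"
proof -
  define P where "P = (\<Prod>l\<in>{1..n}-{i}. [:- r l, 1::real:])"
  define PA where "PA = (\<Sum>j\<le>n. monom (A j) j)"
  have "poly PA = poly (\<Prod>l\<in>{1..n}. [:- r l, 1::real:])"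
    using poly by (auto simp: PA_def poly_sum poly_monom poly_prod atLeast0AtMost[symmetric] fun_eq_iff)
  then have "PA = (\<Prod>l\<in>{1..n}. [:- r l, 1::real:])" by (simp add: poly_eq_poly_eq_iff)
  also have "\<dots> = [:- r i, 1:] * P" unfolding P_def using i by (simp add: prod.remove)
  finally have PAe: "PA = [:- r i, 1:] * P" .
  have cA: "A j = - r i * coeff P j + (if j = 0 then 0 else coeff P (j - 1))" if "j \<le> n" for j
  proof -
    have "A j = coeff PA j" unfolding PA_def using that by (simp add: coeff_sum_monom)
    also have "\<dots> = - r i * coeff P j + (if j = 0 then 0 else coeff P (j - 1))"
      unfolding PAe by (simp add: coeff_pCons')
    finally show ?thesis .
  qed
  show ?thesis
  proof (cases "k < n")
    case True
    have e: "A (n-k) = - r i * coeff P (n-k) + coeff P (n-1-k)"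
      using cA[of "n-k"] True by (simp add: diff_diff_add)
    obtain j where j: "k = Suc j" using k by (cases k) auto
    have e': "A (n - Suc j) = - r i * coeff P (n - Suc j) + coeff P (n - Suc (Suc j))"
      using e j by simp
    show ?thesis using True unfolding sigmaA_def sigmaI_def P_def[symmetric] j
      by (simp add: algebra_simps e')
  next
    case False
    then have kn: "k = n" using k by auto
    obtain j where j: "n = Suc j" using k kn by (cases n) auto
    show ?thesis unfolding sigmaA_def sigmaI_def P_def[symmetric] kn using cA[of 0] j
      by (simp add: algebra_simps)
  qed
qed



lemma g_deriv:
  fixes e r \<xi> a :: real
  assumes e: "e = 1 \<or> e = -1" and pos: "e * (a - r) > 0"
  shows "((\<lambda>t. \<xi> / sqrt (e * (t - r))) has_real_derivative
     - (\<xi> / sqrt (e * (a - r))) / (2 * (a - r))) (at a)"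
proof -
  have ar: "a - r \<noteq> 0" using pos by auto
  have s: "sqrt (e * (a - r)) > 0" using pos by simp
  have "((\<lambda>t. \<xi> / sqrt (e * (t - r))) has_real_derivative
      - (\<xi> * (inverse (sqrt (e * (a - r))) / 2 * e)) / (sqrt (e * (a - r)))^2) (at a)"
    using pos s ar e by (auto intro!: derivative_eq_intros simp: power2_eq_square)
      (simp add: divide_simps; simp add: algebra_simps)
  moreover have "- (\<xi> * (inverse (sqrt (e * (a - r))) / 2 * e)) / (sqrt (e * (a - r)))^2
      = - (\<xi> / sqrt (e * (a - r))) / (2 * (a - r))"
    using pos s e ar by (auto simp: field_simps)
  ultimately show ?thesis by simp
qed

lemma part2:
  fixes x r \<epsilon> \<xi> :: "nat \<Rightarrow> real" and A :: "nat \<Rightarrow> real"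
  assumes n1: "n \<ge> 1" and I_open: "open I"
    and poly: "\<forall>t. (\<Sum>k=0..n. A k * t^k) = (\<Prod>i=1..n. t - r i)"
    and eps: "\<forall>i\<in>{1..n}. \<epsilon> i = 1 \<or> \<epsilon> i = -1"
    and pos: "\<forall>i\<in>{1..n}. \<forall>a\<in>I. \<epsilon> i * (a - r i) > 0"
    and xe: "\<forall>a\<in>I. x' a = (\<Sum>i=1..n. \<xi> i / sqrt (\<epsilon> i * (a - r i)))"
  shows "(let \<beta> = (\<lambda>k a. \<Sum>i=1..n. \<xi> i / sqrt (\<epsilon> i * (a - r i)) * sigmaI n r i (k - 1))
           in (\<forall>a\<in>I. x' differentiable (at a) \<and> (\<forall>k\<in>{1..n}. \<beta> k differentiable (at a)))
              \<and> beta_system n A x' \<beta> I)"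
proof -
  define g where "g i t = \<xi> i / sqrt (\<epsilon> i * (t - r i))" for i t
  define D where "D i t = - g i t / (2 * (t - r i))" for i t
  define s where "s i m = sigmaI n r i m" for i m
  define \<beta> where "\<beta> k t = (\<Sum>i=1..n. g i t * s i (k - 1))" for k t
  have Dg: "(g i has_real_derivative D i a) (at a)" if "i \<in> {1..n}" "a \<in> I" for i a
    unfolding g_def D_def using g_deriv[of "\<epsilon> i" a "r i" "\<xi> i"] eps pos that by auto
  have Db: "(\<beta> k has_real_derivative (\<Sum>i=1..n. D i a * s i (k - 1))) (at a)" if "a \<in> I" for k a
    unfolding \<beta>_def by (intro DERIV_sum DERIV_cmult_right Dg that) simp
  have Dx: "(x' has_real_derivative (\<Sum>i=1..n. D i a)) (at a)" if a: "a \<in> I" for a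
  proof (rule has_field_derivative_transform_within_open[OF _ I_open a])
    show "((\<lambda>t. \<Sum>i=1..n. g i t) has_real_derivative (\<Sum>i=1..n. D i a)) (at a)"
      by (intro DERIV_sum Dg a)
    show "\<And>t. t \<in> I \<Longrightarrow> (\<Sum>i=1..n. g i t) = x' t" using xe by (simp add: g_def)
  qed
  have gD: "g i a = - 2 * (a - r i) * D i a" if "i \<in> {1..n}" "a \<in> I" for i a
  proof -
    have "a - r i \<noteq> 0" using pos that by fastforce
    then show ?thesis unfolding D_def by (simp add: field_simps)
  qed
  have key: "- a * (\<Sum>i=1..n. D i a * s i (k - 1)) - (\<Sum>i=1..n. g i a * s i (k - 1)) / 2
      + sigmaA n A k * (\<Sum>i=1..n. D i a) = (\<Sum>i=1..n. D i a * s i k)"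
    if a: "a \<in> I" and k: "1 \<le> k" "k \<le> n" for a k
  proof -
    have "- a * (\<Sum>i=1..n. D i a * s i (k - 1)) - (\<Sum>i=1..n. g i a * s i (k - 1)) / 2
      + sigmaA n A k * (\<Sum>i=1..n. D i a)
      = (\<Sum>i=1..n. - a * (D i a * s i (k - 1)) - g i a * s i (k - 1) / 2 + sigmaA n A k * D i a)"
      by (simp add: sum_distrib_left sum_subtractf sum.distrib sum_divide_distrib)
    also have "\<dots> = (\<Sum>i=1..n. D i a * s i k)"
    proof (rule sum.cong[OF refl])
      fix i assume i: "i \<in> {1..n}"
      show "- a * (D i a * s i (k - 1)) - g i a * s i (k - 1) / 2 + sigmaA n A k * D i a = D i a * s i k"
        unfolding gD[OF i a] sigma_rec[OF poly i k] s_def by (simp add: algebra_simps add_divide_distrib diff_divide_distrib)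
    qed
    finally show ?thesis .
  qed
  have bs: "beta_system n A x' \<beta> I"
    unfolding beta_system_def
  proof (intro ballI conjI allI impI)
    fix a assume a: "a \<in> I"
    have s0: "s i 0 = 1" if "i \<in> {1..n}" for i using sigmaI0[OF that n1] by (simp add: s_def)
    show "deriv (\<beta> 1) a = deriv x' a"
      unfolding DERIV_imp_deriv[OF Db[OF a]] DERIV_imp_deriv[OF Dx[OF a]]
      by (rule sum.cong) (auto simp: s0)
    show "deriv (\<beta> (k + 1)) a = - a * deriv (\<beta> k) a - \<beta> k a / 2 + sigmaA n A k * deriv x' a"
      if "1 \<le> k \<and> k \<le> n - 1" for k
    proof -
      have "k \<le> n" using that by linarith
      then show ?thesis unfolding DERIV_imp_deriv[OF Db[OF a]] DERIV_imp_deriv[OF Dx[OF a]]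
        using key[OF a, of k] that by (simp add: \<beta>_def)
    qed
    have sn: "s i n = 0" for i by (simp add: s_def sigmaI_def)
    show "0 = - a * deriv (\<beta> n) a - \<beta> n a / 2 + sigmaA n A n * deriv x' a"
      unfolding DERIV_imp_deriv[OF Db[OF a]] DERIV_imp_deriv[OF Dx[OF a]]
      using key[OF a, of n] n1 by (simp add: \<beta>_def sn)
  qed
  have beq: "(\<lambda>k a. \<Sum>i=1..n. \<xi> i / sqrt (\<epsilon> i * (a - r i)) * sigmaI n r i (k - 1)) = \<beta>"
    by (simp add: \<beta>_def g_def s_def fun_eq_iff)
  show ?thesis unfolding Let_def beq
    using bs Db Dx real_differentiable_def by blast
qed


theorem proposition10:
  fixes n :: nat and A :: "nat \<Rightarrow> real" and I :: "real set"
  assumes n2: "n \<ge> 2"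
    and An: "A n = 1"
    and I_open: "open I" and I_int: "is_interval I" and I_ne: "I \<noteq> {}"
    and I_pos: "I \<subseteq> {0<..}"
  shows
   "(\<forall>(x :: real \<Rightarrow> real) (\<beta> :: nat \<Rightarrow> real \<Rightarrow> real).
        smooth_real_on I x \<and> (\<forall>a\<in>I. deriv x a \<noteq> 0)
      \<and> (\<forall>k\<in>{1..n}. \<forall>a\<in>I. \<beta> k differentiable (at a))
      \<and> beta_system n A x \<beta> I
      \<longrightarrow> (\<forall>a\<in>I. \<forall>y p q. poisson (HF x) (S1F n A \<beta> x) a y p q = 0))
  \<and> (\<forall>(x :: real \<Rightarrow> real) (r :: nat \<Rightarrow> real) (\<epsilon> :: nat \<Rightarrow> real) (\<xi> :: nat \<Rightarrow> real).
        (\<forall>t. (\<Sum>k=0..n. A k * t^k) = (\<Prod>i=1..n. t - r i))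
      \<and> inj_on r {1..n}
      \<and> (\<forall>i\<in>{1..n}. \<epsilon> i = 1 \<or> \<epsilon> i = -1)
      \<and> (\<forall>i\<in>{1..n}. \<forall>a\<in>I. \<epsilon> i * (a - r i) > 0)
      \<and> (\<forall>a\<in>I. x a = (\<Sum>i=1..n. \<xi> i / sqrt (\<epsilon> i * (a - r i))))
      \<longrightarrow> (let \<beta> = (\<lambda>k a. \<Sum>i=1..n. \<xi> i / sqrt (\<epsilon> i * (a - r i)) * sigmaI n r i (k - 1))
           in (\<forall>a\<in>I. x differentiable (at a) \<and> (\<forall>k\<in>{1..n}. \<beta> k differentiable (at a)))
              \<and> beta_system n A x \<beta> I))"
  proof (intro conjI allI impI)
  fix x :: "real \<Rightarrow> real" and \<beta> :: "nat \<Rightarrow> real \<Rightarrow> real"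
  assume h: "smooth_real_on I x \<and> (\<forall>a\<in>I. deriv x a \<noteq> 0)
      \<and> (\<forall>k\<in>{1..n}. \<forall>a\<in>I. \<beta> k differentiable (at a)) \<and> beta_system n A x \<beta> I"
  have n1: "n \<ge> 1" using n2 by simp
  show "\<forall>a\<in>I. \<forall>y p q. poisson (HF x) (S1F n A \<beta> x) a y p q = 0"
    using part1[of n A I x \<beta>] n1 An I_pos h by blast
next
  fix x :: "real \<Rightarrow> real" and r \<epsilon> \<xi> :: "nat \<Rightarrow> real"
  assume h: "(\<forall>t. (\<Sum>k=0..n. A k * t^k) = (\<Prod>i=1..n. t - r i))
      \<and> inj_on r {1..n}
      \<and> (\<forall>i\<in>{1..n}. \<epsilon> i = 1 \<or> \<epsilon> i = -1)
      \<and> (\<forall>i\<in>{1..n}. \<forall>a\<in>I. \<epsilon> i * (a - r i) > 0)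
      \<and> (\<forall>a\<in>I. x a = (\<Sum>i=1..n. \<xi> i / sqrt (\<epsilon> i * (a - r i))))"
  have n1: "n \<ge> 1" using n2 by simp
  show "let \<beta> = (\<lambda>k a. \<Sum>i=1..n. \<xi> i / sqrt (\<epsilon> i * (a - r i)) * sigmaI n r i (k - 1))
           in (\<forall>a\<in>I. x differentiable (at a) \<and> (\<forall>k\<in>{1..n}. \<beta> k differentiable (at a)))
              \<and> beta_system n A x \<beta> I"
    using h by (intro part2[OF n1 I_open]) auto
qed

end
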